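(* Let $a_1\ge1$, $n \ge 1$ and $v \ge 1$ be integers, let $p$ be a prime not dividing $a_1D$, and let $\mathfrak{p}$ be a prime ideal of $\mathcal{O}_K$ lying over $p$. Then $p^v \mid \ell_n$ if and only if $\operatorname{ord}_{\mathfrak{p}^v}(\alpha^2) \mid n$. In particular, $p$ is a primitive divisor of $\ell_n$ if and only if $n = \operatorname{ord}_{\mathfrak{p}}(\alpha^2)$.
   Context: Let $f := X^2 - a_1X - 1$, $D := a_1^2 + 4$, $K := \mathbb{Q}(\sqrt{D})$ (a quadratic field) with ring of integers $\mathcal{O}_K$, and let $\alpha,\beta \in \mathcal{O}_K$ be the roots of $f$ (so $\alpha\beta = -1$, $\alpha+\beta=a_1$, $\alpha$ is a unit). For an ideal $\mathfrak{i}$ of $\mathcal{O}_K$ and $\theta \in \mathcal{O}_K$ invertible modulo $\mathfrak{i}$, $\operatorname{ord}_{\mathfrak{i}}(\theta)$ is the multiplicative order of $\theta$ modulo $\mathfrak{i}$. The Lehmer sequence is $\ell_n := \frac{\alpha^n - (-\beta)^n}{\alpha + \beta}$ for odd $n$ and $\ell_n := \frac{\alpha^n - (-\beta)^n}{\alpha^2 - \beta^2}$ for even $n$ (integers). A prime $p$ is a primitive divisor of $\ell_n$ if $p \mid \ell_n$ but $p \nmid (\alpha^2-\beta^2)^2\ell_1\cdots\ell_{n-1}$, where $(\alpha^2-\beta^2)^2 = a_1^2D$. *)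

theory Defs
  imports "HOL-Analysis.Analysis" "HOL-Algebra.Ideal_Product"
begin

definition qD :: "int \<Rightarrow> int" where
  "qD a1 = a1^2 + 4"

(* K = Q(sqrt D), realised inside the reals (D > 0) *)
definition quadK :: "int \<Rightarrow> real set" where
  "quadK a1 = {of_rat r + of_rat s * sqrt (of_int (qD a1)) | r s. True}"

definition OK :: "int \<Rightarrow> real set" where
  "OK a1 = {x \<in> quadK a1. algebraic_int x}"

definition OK_ring :: "int \<Rightarrow> real ring" where
  "OK_ring a1 = \<lparr> carrier = OK a1, monoid.mult = (*), one = 1, zero = 0, add = (+) \<rparr>"

fun ideal_pow :: "('a, 'b) ring_scheme \<Rightarrow> 'a set \<Rightarrow> nat \<Rightarrow> 'a set" where
  "ideal_pow R I 0 = carrier R"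
| "ideal_pow R I (Suc v) = ideal_prod R I (ideal_pow R I v)"

(* roots of X^2 - a1 X - 1 *)
definition alpha :: "int \<Rightarrow> real" where
  "alpha a1 = (of_int a1 + sqrt (of_int (qD a1))) / 2"

definition beta :: "int \<Rightarrow> real" where
  "beta a1 = (of_int a1 - sqrt (of_int (qD a1))) / 2"

definition ord_mod :: "real set \<Rightarrow> real \<Rightarrow> nat" where
  "ord_mod I \<theta> = (LEAST k. k > 0 \<and> \<theta> ^ k - 1 \<in> I)"

definition lehmer :: "int \<Rightarrow> nat \<Rightarrow> real" where
  "lehmer a1 n = (if odd n
     then (alpha a1 ^ n - (- beta a1) ^ n) / (alpha a1 + beta a1)
     else (alpha a1 ^ n - (- beta a1) ^ n) / (alpha a1 ^ 2 - beta a1 ^ 2))"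

definition rdvd :: "int \<Rightarrow> real \<Rightarrow> bool" where
  "rdvd d x \<longleftrightarrow> (\<exists>z::int. x = of_int (d * z))"

definition primitive_divisor :: "int \<Rightarrow> nat \<Rightarrow> nat \<Rightarrow> bool" where
  "primitive_divisor a1 p n \<longleftrightarrow> prime p \<and> rdvd (int p) (lehmer a1 n) \<and>
     \<not> rdvd (int p) ((alpha a1 ^ 2 - beta a1 ^ 2) ^ 2 * (\<Prod>k\<in>{1..<n}. lehmer a1 k))"

end

theory Submission
  imports Defs
begin


locale L =
  fixes a1 :: int
  assumes a1: "a1 \<ge> 1" and cr: "cring (OK_ring a1)"
begin

abbreviation "D \<equiv> qD a1"
abbreviation "sD \<equiv> sqrt (real_of_int (qD a1))"
abbreviation "Ok \<equiv> OK a1"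

lemma D_ge: "D \<ge> 5"
proof -
  have "a1^2 \<ge> 1" using a1 by (simp add: one_le_power)
  thus ?thesis by (simp add: qD_def)
qed

lemma absD [simp]: "\<bar>real_of_int D\<bar> = real_of_int D"
  using D_ge by simp

lemma sD_sq: "sD * sD = of_int D"
  by simp

lemma sD_pos: "sD > 0" using D_ge by simp

lemma alg_int_quad:
  assumes "x * x = of_int T * x - of_int N"
  shows "algebraic_int (x::real)"
proof (rule algebraic_int.intros[of "[:of_int N, - of_int T, 1:]"])
  show "lead_coeff [:of_int N, - of_int T, 1:] = (1::real)" by simp
  show "\<forall>i. coeff [:of_int N, - of_int T, 1:] i \<in> (\<int>::real set)"
    by (auto simp: coeff_pCons split: nat.splits)
  show "poly [:of_int N, - of_int T, 1:] x = 0" using assms by (simp add: algebra_simps)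
qed

lemma sD_not_rat: "\<not> sD \<in> \<rat>"
proof (rule notI)
  assume r: "sD \<in> \<rat>"
  have "algebraic_int sD" by (rule alg_int_quad[of _ 0 "-D"]) (use sD_sq in simp)
  hence "sD \<in> \<int>" using r by (intro rational_algebraic_int_is_int)
  then obtain k where k: "sD = of_int k" by (auto elim: Ints_cases)
  have "of_int (k*k) = (of_int D :: real)" using sD_sq k by simp
  hence kk: "k*k = a1^2 + 4" unfolding qD_def by linarith
  have "k > 0" using sD_pos k by simp
  have "k > a1"
  proof (rule ccontr)
    assume "\<not> k > a1" hence "k \<le> a1" by simp
    hence "k*k \<le> a1*a1" using \<open>k>0\<close> by (simp add: mult_mono)
    thus False using kk by (simp add: power2_eq_square)
  qed
  then obtain j where j: "k = a1 + j" "j \<ge> 1" by (metis add.commute diff_add_cancel zle_diff1_eq zless_imp_add1_zle add_le_cancel_left)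
  have e: "2*a1*j + j*j = 4" using kk j by (simp add: power2_eq_square algebra_simps)
  show False
  proof (cases "j = 1")
    case True thus False using e by presburger
  next
    case False
    hence "j \<ge> 2" using j by linarith
    hence "2*a1*j \<ge> 2*1*2" using a1 by (intro mult_mono) auto
    moreover have "j*j \<ge> 2*2" using \<open>j \<ge> 2\<close> by (intro mult_mono) auto
    ultimately show False using e by linarith
  qed
qed

lemma rep_unique:
  assumes "of_rat r + of_rat s * sD = of_rat r' + of_rat s' * sD"
  shows "r = r' \<and> s = s'"
proof (cases "s = s'")
  case True thus ?thesis using assms by simp
next
  case False
  hence "sD = of_rat ((r - r') / (s' - s))" using assms
    by (simp add: of_rat_divide of_rat_diff field_simps)
  hence "sD \<in> \<rat>" by simp
  thus ?thesis using sD_not_rat by simp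
qed

definition qre :: "real \<Rightarrow> rat" where "qre x = (SOME r. \<exists>s. x = of_rat r + of_rat s * sD)"
definition qim :: "real \<Rightarrow> rat" where "qim x = (SOME s. \<exists>r. x = of_rat r + of_rat s * sD)"
definition cnj :: "real \<Rightarrow> real" where "cnj x = of_rat (qre x) - of_rat (qim x) * sD"

lemma rep_eq:
  assumes "x = of_rat r + of_rat s * sD"
  shows "qre x = r" "qim x = s"
proof -
  have "\<exists>s. x = of_rat (qre x) + of_rat s * sD" unfolding qre_def
    by (rule someI_ex) (use assms in blast)
  then obtain s1 where "x = of_rat (qre x) + of_rat s1 * sD" by blast
  thus "qre x = r" using rep_unique assms by metis
  have "\<exists>r. x = of_rat r + of_rat (qim x) * sD" unfolding qim_def
    by (rule someI_ex) (use assms in blast)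
  then obtain r1 where "x = of_rat r1 + of_rat (qim x) * sD" by blast
  thus "qim x = s" using rep_unique assms by metis
qed

lemma cnj_rep: "cnj (of_rat r + of_rat s * sD) = of_rat r - of_rat s * sD"
  unfolding cnj_def using rep_eq by simp

lemma cnj_rep2: "x = of_rat r + of_rat s * sD \<Longrightarrow> cnj x = of_rat r - of_rat s * sD"
  using cnj_rep by simp

lemma quadK_iff: "x \<in> quadK a1 \<longleftrightarrow> (\<exists>r s. x = of_rat r + of_rat s * sD)"
  unfolding quadK_def by auto

lemma quadK_add: assumes "x \<in> quadK a1" "y \<in> quadK a1"
  shows "x + y \<in> quadK a1" "cnj (x + y) = cnj x + cnj y"
proof -
  obtain r s r' s' where e: "x = of_rat r + of_rat s * sD" "y = of_rat r' + of_rat s' * sD"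
    using assms quadK_iff by blast
  have xy: "x + y = of_rat (r + r') + of_rat (s + s') * sD" using e by (simp add: of_rat_add algebra_simps)
  thus "x + y \<in> quadK a1" unfolding quadK_iff by blast
  show "cnj (x + y) = cnj x + cnj y" unfolding cnj_rep2[OF xy] cnj_rep2[OF e(1)] cnj_rep2[OF e(2)]
    by (simp add: of_rat_add algebra_simps)
qed

lemma quadK_mult: assumes "x \<in> quadK a1" "y \<in> quadK a1"
  shows "x * y \<in> quadK a1" "cnj (x * y) = cnj x * cnj y"
proof -
  obtain r s r' s' where e: "x = of_rat r + of_rat s * sD" "y = of_rat r' + of_rat s' * sD"
    using assms quadK_iff by blast
  have sq: "of_rat s * sD * (of_rat s' * sD) = of_rat (s * s' * of_int D)"
  proof -
    have "of_rat s * sD * (of_rat s' * sD) = of_rat s * of_rat s' * (sD * sD)" by (simp add: algebra_simps)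
    also have "\<dots> = of_rat (s * s' * of_int D)" by (simp add: sD_sq of_rat_mult)
    finally show ?thesis .
  qed
  have xy: "x * y = of_rat (r * r' + s * s' * of_int D) + of_rat (r * s' + s * r') * sD"
  proof -
    have "x * y = of_rat r * of_rat r' + of_rat s * sD * (of_rat s' * sD) + (of_rat r * of_rat s' + of_rat s * of_rat r') * sD"
      unfolding e by (simp add: algebra_simps)
    thus ?thesis by (simp add: sq of_rat_add of_rat_mult)
  qed
  have cxy: "cnj x * cnj y = of_rat (r * r' + s * s' * of_int D) - of_rat (r * s' + s * r') * sD"
  proof -
    have "cnj x * cnj y = of_rat r * of_rat r' + of_rat s * sD * (of_rat s' * sD) - (of_rat r * of_rat s' + of_rat s * of_rat r') * sD"
      unfolding cnj_rep2[OF e(1)] cnj_rep2[OF e(2)] by (simp add: algebra_simps)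
    thus ?thesis by (simp add: sq of_rat_add of_rat_mult)
  qed
  show "x * y \<in> quadK a1" unfolding quadK_iff using xy by blast
  show "cnj (x * y) = cnj x * cnj y" unfolding cnj_rep2[OF xy] cxy ..
qed

lemma quadK_rat: "of_rat c \<in> quadK a1" "cnj (of_rat c) = of_rat c"
proof -
  have e: "of_rat c = of_rat c + of_rat 0 * sD" by simp
  show "of_rat c \<in> quadK a1" unfolding quadK_iff by (rule exI[of _ c], rule exI[of _ 0]) simp
  show "cnj (of_rat c) = of_rat c" by (subst e, subst cnj_rep) simp
qed

lemma quadK_int: "of_int k \<in> quadK a1" "cnj (of_int k) = of_int k"
  using quadK_rat[of "of_int k"] by simp_all

lemma quadK_sD: "sD \<in> quadK a1" "cnj sD = - sD"
proof -
  have e: "sD = of_rat 0 + of_rat 1 * sD" by simp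
  show "sD \<in> quadK a1" unfolding quadK_iff by (rule exI[of _ 0], rule exI[of _ 1]) simp
  show "cnj sD = - sD" by (subst e, subst cnj_rep) simp
qed

lemma quadK_cnj: assumes "x \<in> quadK a1" shows "cnj x \<in> quadK a1" "cnj (cnj x) = x"
proof -
  obtain r s where e: "x = of_rat r + of_rat s * sD" using assms quadK_iff by blast
  have c: "cnj x = of_rat r + of_rat (-s) * sD" using e cnj_rep by (simp add: of_rat_minus)
  thus "cnj x \<in> quadK a1" unfolding quadK_iff by blast
  have "cnj (cnj x) = of_rat r - of_rat (-s) * sD" by (rule cnj_rep2[OF c])
  thus "cnj (cnj x) = x" using e by (simp add: of_rat_minus)
qed

lemma quadK_neg: assumes "x \<in> quadK a1" shows "- x \<in> quadK a1" "cnj (- x) = - cnj x"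
  using quadK_mult[OF quadK_int(1)[of "-1"] assms] quadK_int[of "-1"] by simp_all

end

context L begin

lemma O_quadK: "x \<in> Ok \<Longrightarrow> x \<in> quadK a1" unfolding OK_def by auto
lemma O_alg: "x \<in> Ok \<Longrightarrow> algebraic_int x" unfolding OK_def by auto
lemma O_intro: "x \<in> quadK a1 \<Longrightarrow> algebraic_int x \<Longrightarrow> x \<in> Ok" unfolding OK_def by auto

lemma O_mult: "x \<in> Ok \<Longrightarrow> y \<in> Ok \<Longrightarrow> x * y \<in> Ok"
proof -
  interpret cring "OK_ring a1" by (rule cr)
  assume "x \<in> Ok" "y \<in> Ok"
  thus ?thesis using m_closed[of x y] by (simp add: OK_ring_def)
qed

lemma O_add: "x \<in> Ok \<Longrightarrow> y \<in> Ok \<Longrightarrow> x + y \<in> Ok"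
proof -
  interpret cring "OK_ring a1" by (rule cr)
  assume "x \<in> Ok" "y \<in> Ok"
  thus ?thesis using a_closed[of x y] by (simp add: OK_ring_def)
qed

lemma O_neg: "x \<in> Ok \<Longrightarrow> - x \<in> Ok"
  using O_quadK O_alg O_intro quadK_neg algebraic_int_minus by blast

lemma O_diff: "x \<in> Ok \<Longrightarrow> y \<in> Ok \<Longrightarrow> x - y \<in> Ok"
  using O_add[of x "-y"] O_neg by simp

lemma O_int: "of_int k \<in> Ok"
  using O_intro quadK_int by simp

lemma O_nat: "of_nat k \<in> Ok"
  using O_int[of "int k"] by simp

lemma O_pow: "x \<in> Ok \<Longrightarrow> x ^ k \<in> Ok"
  by (induction k) (auto intro: O_mult simp: O_int[of 1, simplified])

lemma poly_cnj:
  assumes "\<forall>i. coeff q i \<in> \<int>" "x \<in> quadK a1"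
  shows "poly q x \<in> quadK a1 \<and> cnj (poly q x) = poly q (cnj x)"
  using assms(1)
proof (induction q)
  case 0
  then show ?case using quadK_int[of 0] by simp
next
  case (pCons a q)
  have "a \<in> \<int>" using pCons.prems by (metis coeff_pCons_0)
  then obtain k where k: "a = of_int k" by (auto elim: Ints_cases)
  have "\<forall>i. coeff q i \<in> \<int>" using pCons.prems by (metis coeff_pCons_Suc)
  with pCons.IH have ih: "poly q x \<in> quadK a1" "cnj (poly q x) = poly q (cnj x)" by auto
  have xq: "x * poly q x \<in> quadK a1" "cnj (x * poly q x) = cnj x * cnj (poly q x)"
    using quadK_mult[OF assms(2) ih(1)] by auto
  have "poly (pCons a q) x = of_int k + x * poly q x" by (simp add: k)
  moreover have "of_int k + x * poly q x \<in> quadK a1"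
    "cnj (of_int k + x * poly q x) = of_int k + cnj x * poly q (cnj x)"
    using quadK_add[OF quadK_int(1) xq(1)] quadK_int(2) xq(2) ih(2) by auto
  ultimately show ?case by (simp add: k)
qed

lemma O_cnj: assumes "x \<in> Ok" shows "cnj x \<in> Ok"
proof -
  from O_alg[OF assms] obtain q where q: "lead_coeff q = 1" "\<forall>i. coeff q i \<in> \<int>" "poly q x = 0"
    by (auto elim: algebraic_int.cases)
  have "poly q (cnj x) = cnj (poly q x)" using poly_cnj[OF q(2) O_quadK[OF assms]] by simp
  also have "\<dots> = 0" using q(3) quadK_int(2)[of 0] by simp
  finally have "algebraic_int (cnj x)" using q by (intro algebraic_int.intros[of q]) auto
  thus ?thesis using O_intro quadK_cnj O_quadK assms by blast
qed

lemma O_rat_int: "x \<in> Ok \<Longrightarrow> x \<in> \<rat> \<Longrightarrow> x \<in> \<int>"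
  using O_alg rational_algebraic_int_is_int by blast

lemma trace_norm_rat:
  assumes "x \<in> quadK a1"
  obtains r s where "x = of_rat r + of_rat s * sD" "x + cnj x = of_rat (2 * r)"
      "x * cnj x = of_rat (r * r - s * s * of_int D)"
proof -
  obtain r s where e: "x = of_rat r + of_rat s * sD" using assms quadK_iff by blast
  have c: "cnj x = of_rat r - of_rat s * sD" by (rule cnj_rep2[OF e])
  have "x + cnj x = of_rat (2 * r)" by (subst c, subst e) (simp add: of_rat_mult)
  moreover have "x * cnj x = of_rat (r * r - s * s * of_int D)"
  proof -
    have "x * cnj x = of_rat r * of_rat r - of_rat s * of_rat s * (sD * sD)"
      by (subst c, subst e) (simp add: algebra_simps)
    also have "\<dots> = of_rat (r * r - s * s * of_int D)"
      by (subst sD_sq) (simp add: of_rat_mult of_rat_diff)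
    finally show ?thesis .
  qed
  ultimately show ?thesis using that e by blast
qed

lemma trace_int: "x \<in> Ok \<Longrightarrow> x + cnj x \<in> \<int>"
  by (metis O_add O_cnj O_quadK O_rat_int Rats_of_rat trace_norm_rat)

lemma norm_int: "x \<in> Ok \<Longrightarrow> x * cnj x \<in> \<int>"
  by (metis O_mult O_cnj O_quadK O_rat_int Rats_of_rat trace_norm_rat)

lemma O_by_tn:
  assumes "x \<in> quadK a1" "x + cnj x \<in> \<int>" "x * cnj x \<in> \<int>"
  shows "x \<in> Ok"
proof -
  obtain T where T: "x + cnj x = of_int T" using assms(2) by (auto elim: Ints_cases)
  obtain N where N: "x * cnj x = of_int N" using assms(3) by (auto elim: Ints_cases)
  have "x * x = of_int T * x - of_int N" using T N by (simp flip: T N add: algebra_simps)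
  hence "algebraic_int x" by (rule alg_int_quad)
  thus ?thesis using assms(1) O_intro by blast
qed

lemma quadK_scale: assumes "x \<in> quadK a1"
  shows "of_rat c * x \<in> quadK a1" "cnj (of_rat c * x) = of_rat c * cnj x"
  using quadK_mult[OF quadK_rat(1) assms] quadK_rat(2) by auto

end

context L begin

abbreviation "al \<equiv> alpha a1"
abbreviation "be \<equiv> beta a1"

lemma ab_sum: "al + be = of_int a1" by (simp add: alpha_def beta_def field_simps)
lemma ab_diff: "al - be = sD" by (simp add: alpha_def beta_def field_simps)
lemma ab_prod: "al * be = -1"
proof -
  have "al * be = (of_int a1 * of_int a1 - sD * sD) / 4" by (simp add: alpha_def beta_def field_simps)
  also have "\<dots> = -1" by (subst sD_sq) (simp add: qD_def power2_eq_square)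
  finally show ?thesis .
qed
lemma al_sq: "al * al = of_int a1 * al + 1"
proof -
  have "al * al = al * (al + be) - al * be" by (simp add: algebra_simps)
  also have "\<dots> = of_int a1 * al + 1" using ab_sum ab_prod by (simp add: algebra_simps)
  finally show ?thesis .
qed
lemma be_sq: "be * be = of_int a1 * be + 1"
proof -
  have "be * be = be * (al + be) - al * be" by (simp add: algebra_simps)
  also have "\<dots> = of_int a1 * be + 1" using ab_sum ab_prod by (simp add: algebra_simps)
  finally show ?thesis .
qed

lemma al_quadK: "al \<in> quadK a1"
proof -
  have "al = of_rat (of_int a1 / 2) + of_rat (1/2) * sD" by (simp add: alpha_def of_rat_divide field_simps)
  thus ?thesis unfolding quadK_iff by blast
qed
lemma be_quadK: "be \<in> quadK a1"
proof -
  have "be = of_rat (of_int a1 / 2) + of_rat (-1/2) * sD" by (simp add: beta_def of_rat_divide of_rat_minus field_simps)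
  thus ?thesis unfolding quadK_iff by blast
qed
lemma al_O: "al \<in> Ok"
  using O_intro[OF al_quadK alg_int_quad[of al a1 "-1"]] al_sq by simp
lemma be_O: "be \<in> Ok"
  using O_intro[OF be_quadK alg_int_quad[of be a1 "-1"]] be_sq by simp
lemma sD_O: "sD \<in> Ok"
  using O_intro[OF quadK_sD(1) alg_int_quad[of sD 0 "-D"]] sD_sq by simp

lemma nb_al: "al * (- be) = 1" using ab_prod by simp
lemma al_ne: "al \<noteq> 0" using ab_prod by auto

fun U :: "nat \<Rightarrow> int" where
  "U 0 = 0" | "U (Suc 0) = 1" | "U (Suc (Suc n)) = a1 * U (Suc n) + U n"

lemma al_pow: "al ^ Suc n = of_int (U (Suc n)) * al + of_int (U n)"
proof (induction n rule: nat_less_induct)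
  case (1 n)
  show ?case
  proof (cases n)
    case 0 thus ?thesis by simp
  next
    case (Suc m)
    have "al ^ Suc n = al * al ^ Suc m" by (simp add: Suc)
    also have "\<dots> = of_int (U (Suc m)) * (al * al) + of_int (U m) * al"
      using 1 Suc by (simp add: algebra_simps)
    also have "\<dots> = of_int (U (Suc n)) * al + of_int (U n)"
      by (subst al_sq) (simp add: Suc algebra_simps)
    finally show ?thesis .
  qed
qed

lemma be_pow: "be ^ Suc n = of_int (U (Suc n)) * be + of_int (U n)"
proof (induction n rule: nat_less_induct)
  case (1 n)
  show ?case
  proof (cases n)
    case 0 thus ?thesis by simp
  next
    case (Suc m)
    have "be ^ Suc n = be * be ^ Suc m" by (simp add: Suc)
    also have "\<dots> = of_int (U (Suc m)) * (be * be) + of_int (U m) * be"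
      using 1 Suc by (simp add: algebra_simps)
    also have "\<dots> = of_int (U (Suc n)) * be + of_int (U n)"
      by (subst be_sq) (simp add: Suc algebra_simps)
    finally show ?thesis .
  qed
qed

lemma U_even: "a1 dvd U (2 * m)"
proof (induction m)
  case 0 thus ?case by simp
next
  case (Suc m)
  have "U (2 * Suc m) = a1 * U (Suc (2*m)) + U (2*m)"
    by (metis U.simps(3) mult_Suc_right add_2_eq_Suc)
  thus ?case using Suc by simp
qed

definition Lf :: "nat \<Rightarrow> int" where
  "Lf n = (if odd n then U n + 2 * (U (n - 1) div a1) else U n div a1)"

lemma a1_ne: "real_of_int a1 \<noteq> 0" using a1 by simp

lemma lehmer_int: assumes "n \<ge> 1" shows "lehmer a1 n = of_int (Lf n)"
proof -
  obtain m where m: "n = Suc m" using assms by (cases n) auto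
  have dpow: "al ^ n - be ^ n = of_int (U n) * sD"
  proof -
    have "al ^ n - be ^ n = of_int (U n) * (al - be)" unfolding m al_pow be_pow by (simp add: algebra_simps)
    thus ?thesis by (simp add: ab_diff)
  qed
  have spow: "al ^ n + be ^ n = of_int (U n) * of_int a1 + 2 * of_int (U m)"
  proof -
    have "al ^ n + be ^ n = of_int (U n) * (al + be) + 2 * of_int (U m)" unfolding m al_pow be_pow by (simp add: algebra_simps)
    thus ?thesis by (simp add: ab_sum)
  qed
  show ?thesis
  proof (cases "odd n")
    case True
    have "even m" using True m by simp
    then obtain k where k: "m = 2 * k" by auto
    obtain c where c: "U m = a1 * c" using U_even[of k] k by (auto elim: dvdE)
    have "(- be) ^ n = - (be ^ n)" using True by simp
    hence "lehmer a1 n = (al ^ n + be ^ n) / (al + be)" unfolding lehmer_def using True by simp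
    also have "\<dots> = of_int (U n) + 2 * of_int c" unfolding spow ab_sum c using a1_ne
      by (simp add: field_simps)
    also have "\<dots> = of_int (Lf n)" unfolding Lf_def using True m c a1 by simp
    finally show ?thesis .
  next
    case False
    then obtain k where k: "n = 2 * k" by auto
    obtain c where c: "U n = a1 * c" using U_even[of k] k by (auto elim: dvdE)
    have "(- be) ^ n = be ^ n" using False by simp
    hence "lehmer a1 n = (al ^ n - be ^ n) / (al ^ 2 - be ^ 2)" unfolding lehmer_def using False by simp
    also have "al ^ 2 - be ^ 2 = (al - be) * (al + be)" by (simp add: power2_eq_square algebra_simps)
    also have "(al ^ n - be ^ n) / ((al - be) * (al + be)) = of_int c"
      unfolding dpow ab_sum ab_diff c using a1_ne sD_pos by (simp add: field_simps)
    also have "\<dots> = of_int (Lf n)" unfolding Lf_def using False c a1 by simp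
    finally show ?thesis .
  qed
qed

definition cn :: "nat \<Rightarrow> real" where "cn n = (if odd n then al + be else al ^ 2 - be ^ 2)"
definition Mn :: "nat \<Rightarrow> int" where "Mn n = (if odd n then a1 ^ 2 else a1 ^ 2 * D)"

lemma cn_O: "cn n \<in> Ok"
  unfolding cn_def using O_add O_diff O_pow al_O be_O by auto

lemma cn_sq: "cn n * cn n = of_int (Mn n)"
proof -
  have "al ^ 2 - be ^ 2 = (al - be) * (al + be)" by (simp add: power2_eq_square algebra_simps)
  hence "(al ^ 2 - be ^ 2) * (al ^ 2 - be ^ 2) = (sD * sD) * (of_int a1 * of_int a1)"
    unfolding ab_sum ab_diff by (simp add: algebra_simps)
  thus ?thesis unfolding cn_def Mn_def using ab_sum by (simp add: sD_sq power2_eq_square)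
qed

lemma Mn_ne: "Mn n \<noteq> 0"
  using a1 D_ge unfolding Mn_def by (cases "odd n") auto

lemma cn_ne: "cn n \<noteq> 0"
  using cn_sq[of n] Mn_ne[of n] by auto

lemma key_id: assumes "n \<ge> 1" shows "(al ^ 2) ^ n - 1 = al ^ n * cn n * of_int (Lf n)"
proof -
  have "lehmer a1 n = (al ^ n - (- be) ^ n) / cn n" unfolding lehmer_def cn_def by simp
  hence h1: "cn n * of_int (Lf n) = al ^ n - (- be) ^ n" using cn_ne lehmer_int[OF assms] by (simp add: field_simps)
  have "al ^ n * cn n * of_int (Lf n) = al ^ n * (cn n * of_int (Lf n))" by simp
  also have "\<dots> = al ^ n * al ^ n - (al * (- be)) ^ n" unfolding h1 by (simp add: right_diff_distrib flip: power_mult_distrib)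
  also have "\<dots> = (al ^ 2) ^ n - 1" using nb_al by (simp add: power2_eq_square power_mult_distrib)
  finally show ?thesis by simp
qed

end


lemma par_split: fixes x :: int obtains a e where "x = 2 * a + e" "e = 0 \<or> e = 1"
proof -
  have "x = 2 * (x div 2) + x mod 2" by simp
  moreover have "x mod 2 = 0 \<or> x mod 2 = 1" by presburger
  ultimately show ?thesis by (intro that[of "x div 2" "x mod 2"]) auto
qed

lemma pres_aux: fixes Q K N e f :: int
  assumes "4 * Q + e - f + 2 * N = 4 * K" "e = 0 \<or> e = 1" "f = 0 \<or> f = 1"
  shows "2 dvd N"
  using assms by presburger

lemma nt_lemma:
  fixes t N h Dd p :: int
  assumes p: "prime p" and nD: "\<not> p dvd Dd" and pt: "p dvd t" and pN: "p dvd N"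
    and eq: "(t^2 - 4*N) * Dd = h^2" and p2: "p = 2 \<Longrightarrow> Dd mod 4 = 1"
  shows "p^2 dvd N"
proof (cases "p = 2")
  case False
  have "p dvd t^2 - 4*N" using pt pN by (simp add: power2_eq_square)
  hence "p dvd h^2" using eq by (metis dvd_mult2)
  hence "p dvd h" using p prime_dvd_power by blast
  hence "p^2 dvd h^2" by (simp add: power_mono_iff dvd_power_same)
  hence "p^2 dvd (t^2 - 4*N) * Dd" using eq by simp
  moreover have "coprime (p^2) Dd" using p nD by (simp add: prime_imp_coprime)
  ultimately have d1: "p^2 dvd t^2 - 4*N" using coprime_dvd_mult_left_iff by blast
  have d2: "p^2 dvd t^2" using pt by (simp add: dvd_power_same)
  from d2 d1 have "p^2 dvd t^2 - (t^2 - 4*N)" by (rule dvd_diff)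
  hence "p^2 dvd 4 * N" by simp
  moreover have "coprime (p^2) 4"
  proof -
    have "\<not> p dvd 2"
    proof
      assume "p dvd 2"
      hence "p \<le> 2" by (simp add: zdvd_imp_le)
      moreover have "p \<ge> 2" using p by (simp add: prime_ge_2_int)
      ultimately show False using False by simp
    qed
    hence "coprime p 2" using p prime_imp_coprime by blast
    hence "coprime p (2^2)" by (simp only: coprime_power_right_iff) simp
    thus ?thesis by (simp only: coprime_power_left_iff power2_eq_square) (simp add: coprime_mult_right_iff)
  qed
  ultimately show ?thesis using coprime_dvd_mult_right_iff by blast
next
  case True
  have D4: "Dd mod 4 = 1" using p2 True by simp
  obtain t' where t': "t = 2 * t'" using pt True by auto
  obtain N' where N': "N = 2 * N'" using pN True by auto
  have "h^2 = 2 * ((2 * t'^2 - 4 * N') * Dd)" using eq unfolding t' N' by (simp add: power2_eq_square algebra_simps)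
  hence "2 dvd h^2" by simp
  hence "2 dvd h" by (simp add: prime_dvd_power_iff)
  then obtain h' where h': "h = 2 * h'" by auto
  have "4 * ((t'^2 - 2*N') * Dd) = 4 * h'^2" using eq unfolding t' N' h' by (simp add: power2_eq_square algebra_simps)
  hence e2: "(t'^2 - 2*N') * Dd = h'^2" by simp
  define d where "d = Dd div 4"
  have d: "Dd = 4 * d + 1" unfolding d_def using D4 div_mult_mod_eq[of Dd 4] by linarith
  have e3: "h'^2 - t'^2 + 2 * N' = 4 * ((t'^2 - 2*N') * d)" using e2 unfolding d by (simp add: algebra_simps)
  obtain a e where a: "h' = 2 * a + e" "e = 0 \<or> e = 1" by (rule par_split)
  obtain b f where b: "t' = 2 * b + f" "f = 0 \<or> f = 1" by (rule par_split)
  have "h'^2 - t'^2 = 4 * (a*a + a*e - b*b - b*f) + e - f"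
    using a b by (auto simp: power2_eq_square algebra_simps)
  hence "4 * (a*a + a*e - b*b - b*f) + e - f + 2 * N' = 4 * ((t'^2 - 2*N') * d)" using e3 by simp
  hence "2 dvd N'" using a(2) b(2) by (rule pres_aux)
  thus ?thesis unfolding N' True by auto
qed


context L begin

abbreviation "RR \<equiv> OK_ring a1"

lemma carrR [simp]: "carrier RR = Ok" by (simp add: OK_ring_def)
lemma multR [simp]: "x \<otimes>\<^bsub>RR\<^esub> y = x * y" by (simp add: OK_ring_def)
lemma addR [simp]: "x \<oplus>\<^bsub>RR\<^esub> y = x + y" by (simp add: OK_ring_def)
lemma oneR [simp]: "\<one>\<^bsub>RR\<^esub> = 1" by (simp add: OK_ring_def)

lemma I_O: "ideal I RR \<Longrightarrow> x \<in> I \<Longrightarrow> x \<in> Ok"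
  using ideal.Icarr by fastforce
lemma I_mult: "ideal I RR \<Longrightarrow> x \<in> Ok \<Longrightarrow> y \<in> I \<Longrightarrow> x * y \<in> I"
  using ideal.I_l_closed by fastforce
lemma I_add: "ideal I RR \<Longrightarrow> x \<in> I \<Longrightarrow> y \<in> I \<Longrightarrow> x + y \<in> I"
  using additive_subgroup.a_closed[OF ideal.axioms(1)] by fastforce
lemma I_diff: "ideal I RR \<Longrightarrow> x \<in> I \<Longrightarrow> y \<in> I \<Longrightarrow> x - y \<in> I"
  using I_add[of I x "(-1) * y"] I_mult[of I "-1" y] O_int[of "-1"] by simp
lemma I_zero: "ideal I RR \<Longrightarrow> 0 \<in> I"
  using additive_subgroup.zero_closed[OF ideal.axioms(1)] by (fastforce simp: OK_ring_def)

lemma ring_RR: "ring RR" using cr cring.axioms(1) by blast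

lemma ideal_pow_ideal: "ideal I RR \<Longrightarrow> ideal (ideal_pow RR I v) RR"
proof (induction v)
  case 0 thus ?case using ring.oneideal[OF ring_RR] by simp
next
  case (Suc v) thus ?case using ring.ideal_prod_is_ideal[OF ring_RR] by simp
qed

lemma ideal_pow_one: "ideal I RR \<Longrightarrow> ideal_pow RR I 1 = I"
  using ring.ideal_prod_one[OF ring_RR] by simp

lemma pow_mem: "ideal I RR \<Longrightarrow> x \<in> I \<Longrightarrow> x ^ v \<in> ideal_pow RR I v"
proof (induction v)
  case 0 thus ?case using O_int[of 1] by simp
next
  case (Suc v)
  have "x \<otimes>\<^bsub>RR\<^esub> x ^ v \<in> ideal_prod RR I (ideal_pow RR I v)"
    using Suc by (intro ideal_prod.prod) auto
  thus ?case by simp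
qed

end

lemma bez: "coprime (a::int) b \<Longrightarrow> \<exists>u v. u * a + v * b = 1"
  using bezout_int[of a b] by (simp add: coprime_iff_gcd_eq_1)

locale PL = L +
  fixes p :: nat and P :: "real set"
  assumes prime_p: "prime p" and ndvd: "\<not> int p dvd a1 * qD a1"
    and pi: "primeideal P (OK_ring a1)" and pP: "real p \<in> P"
begin

lemma P_ideal: "ideal P RR" using pi primeideal.axioms(1) by blast
lemma P_O: "x \<in> P \<Longrightarrow> x \<in> Ok" using I_O[OF P_ideal] .
lemma P_mult: "x \<in> Ok \<Longrightarrow> y \<in> P \<Longrightarrow> x * y \<in> P" using I_mult[OF P_ideal] .
lemma P_mult2: "x \<in> P \<Longrightarrow> y \<in> Ok \<Longrightarrow> x * y \<in> P" using I_mult[OF P_ideal, of y x] by (simp add: mult.commute)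
lemma P_add: "x \<in> P \<Longrightarrow> y \<in> P \<Longrightarrow> x + y \<in> P" using I_add[OF P_ideal] .
lemma P_diff: "x \<in> P \<Longrightarrow> y \<in> P \<Longrightarrow> x - y \<in> P" using I_diff[OF P_ideal] .
lemma P_prime: "x \<in> Ok \<Longrightarrow> y \<in> Ok \<Longrightarrow> x * y \<in> P \<Longrightarrow> x \<in> P \<or> y \<in> P"
  using primeideal.I_prime[OF pi] by fastforce
lemma one_notin: "1 \<notin> P"
proof
  assume "1 \<in> P"
  hence "P = carrier RR" using ideal.one_imp_carrier[OF P_ideal] by simp
  thus False using primeideal.I_notcarr[OF pi] by simp
qed

lemma p_pos: "p > 0" using prime_p prime_gt_0_nat by blast
lemma p_ne: "real p \<noteq> 0" using p_pos by simp
lemma prime_int_p: "prime (int p)" using prime_p by simp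
lemma p_nd_a1: "\<not> int p dvd a1" using ndvd by (metis dvd_mult2)
lemma p_nd_D: "\<not> int p dvd D" using ndvd by (metis dvd_mult)

lemma P_int: "of_int m \<in> P \<longleftrightarrow> int p dvd m"
proof
  assume "int p dvd m"
  then obtain k where "m = int p * k" by auto
  hence "(of_int m :: real) = of_int k * real p" by simp
  thus "of_int m \<in> P" using P_mult[OF O_int pP] by simp
next
  assume m: "of_int m \<in> P"
  show "int p dvd m"
  proof (rule ccontr)
    assume "\<not> int p dvd m"
    hence "coprime (int p) m" using prime_int_p prime_imp_coprime by blast
    then obtain u w where uw: "u * int p + w * m = 1"
      using bez by blast
    hence "(1::real) = of_int u * real p + of_int w * of_int m"
      by (metis of_int_1 of_int_add of_int_mult of_int_of_nat_eq)
    moreover have "of_int u * real p + of_int w * of_int m \<in> P"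
      using P_add[OF P_mult[OF O_int pP] P_mult[OF O_int m]] .
    ultimately show False using one_notin by simp
  qed
qed

lemma P_int': "x \<in> P \<Longrightarrow> x = of_int m \<Longrightarrow> int p dvd m" using P_int by simp

end

context PL begin

lemma int_of_P: "x \<in> P \<Longrightarrow> x \<in> \<int> \<Longrightarrow> \<exists>k. x = of_int (int p * k)"
proof -
  assume "x \<in> P" "x \<in> \<int>"
  then obtain m where m: "x = of_int m" by (auto elim: Ints_cases)
  hence "int p dvd m" using P_int \<open>x \<in> P\<close> by simp
  thus ?thesis using m by auto
qed

lemma div_p_int: "x \<in> P \<Longrightarrow> x \<in> \<int> \<Longrightarrow> x / real p \<in> \<int>"
proof -
  assume "x \<in> P" "x \<in> \<int>"
  then obtain k where "x = of_int (int p * k)" using int_of_P by blast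
  hence "x / real p = of_int k" using p_ne by simp
  thus ?thesis by simp
qed

lemma K1: assumes x: "x \<in> P" and y: "y \<in> P" shows "x * cnj y / real p \<in> Ok"
proof -
  have xO: "x \<in> Ok" and yO: "y \<in> Ok" using x y P_O by auto
  define z where "z = x * cnj y"
  have zO: "z \<in> Ok" unfolding z_def using O_mult O_cnj xO yO by auto
  have cz: "cnj z = cnj x * y" unfolding z_def
    using quadK_mult[OF O_quadK[OF xO] quadK_cnj(1)[OF O_quadK[OF yO]]] quadK_cnj(2)[OF O_quadK[OF yO]] by simp
  define w where "w = of_rat (1 / of_nat p) * z"
  have w: "w = z / real p" unfolding w_def by (simp add: of_rat_divide)
  have wK: "w \<in> quadK a1" "cnj w = of_rat (1 / of_nat p) * cnj z"
    unfolding w_def using quadK_scale O_quadK[OF zO] by auto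
  have "of_rat (1 / of_nat p) * cnj z = cnj z / real p" by (simp add: of_rat_divide)
  with wK(2) have cw: "cnj w = cnj z / real p" by (rule trans)
  have zz: "z + cnj z = x * cnj y + cnj x * y" using cz z_def by simp
  have "z + cnj z \<in> P" unfolding zz
    using P_add[OF P_mult2[OF x O_cnj[OF yO]] P_mult[OF O_cnj[OF xO] y]] .
  hence t: "(z + cnj z) / real p \<in> \<int>" using div_p_int trace_int[OF zO] by blast
  have "x * cnj x \<in> P" using P_mult2[OF x O_cnj[OF xO]] .
  hence nx: "x * cnj x / real p \<in> \<int>" using div_p_int norm_int[OF xO] by blast
  have "y * cnj y \<in> P" using P_mult2[OF y O_cnj[OF yO]] .
  hence ny: "y * cnj y / real p \<in> \<int>" using div_p_int norm_int[OF yO] by blast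
  have "w + cnj w = (z + cnj z) / real p" by (subst cw) (simp add: w add_divide_distrib)
  hence wt: "w + cnj w \<in> \<int>" using t by simp
  have "w * cnj w = (x * cnj x / real p) * (y * cnj y / real p)" by (subst cw, subst cz) (simp add: w z_def)
  hence wn: "w * cnj w \<in> \<int>" using Ints_mult[OF nx ny] by (simp only:)
  have "w \<in> Ok" using O_by_tn[OF wK(1) wt wn] .
  thus ?thesis unfolding w z_def .
qed

lemma a1_odd_if2: "p = 2 \<Longrightarrow> D mod 4 = 1"
proof -
  assume "p = 2"
  hence "odd a1" using p_nd_a1 by simp
  then obtain k where "a1 = 2 * k + 1" by (auto elim: oddE)
  hence "D = 4 * (k * k + k + 1) + 1" by (simp add: qD_def power2_eq_square algebra_simps)
  hence "\<exists>K. D = 4 * K + 1" by blast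
  then obtain K where "D = 4 * K + 1" by blast
  thus ?thesis by presburger
qed

lemma K2: assumes inv: "\<forall>y\<in>P. cnj y \<in> P" and x: "x \<in> P" shows "x / real p \<in> Ok"
proof -
  have xO: "x \<in> Ok" using x P_O by auto
  obtain r s where e: "x = of_rat r + of_rat s * sD" and tr: "x + cnj x = of_rat (2 * r)"
      and nr: "x * cnj x = of_rat (r * r - s * s * of_int D)"
    using trace_norm_rat[OF O_quadK[OF xO]] by blast
  have xcP: "cnj x \<in> P" using inv x by blast
  obtain t where t: "x + cnj x = of_int t" using trace_int[OF xO] by (auto elim: Ints_cases)
  obtain N where N: "x * cnj x = of_int N" using norm_int[OF xO] by (auto elim: Ints_cases)
  have pt: "int p dvd t" using P_int' P_add[OF x xcP] t by blast
  have pN: "int p dvd N" using P_int' P_mult2[OF x O_cnj[OF xO]] N by blast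
  have tq: "2 * r = of_int t" using tr t by (metis of_rat_eq_iff of_rat_of_int_eq)
  have nq: "r * r - s * s * of_int D = of_int N" using nr N by (metis of_rat_eq_iff of_rat_of_int_eq)
  define h where "h = 2 * s * of_int D"
  have hq: "h * h = of_int ((t^2 - 4 * N) * D)"
  proof -
    have "of_int ((t^2 - 4 * N) * D) = ((2 * r) * (2 * r) - 4 * (r * r - s * s * of_int D)) * (of_int D :: rat)"
      unfolding tq nq by (simp add: power2_eq_square)
    also have "\<dots> = h * h" unfolding h_def by (simp add: algebra_simps)
    finally show ?thesis by simp
  qed
  have "real_of_rat h * real_of_rat h = real_of_rat (h * h)" by (simp add: of_rat_mult)
  also have "\<dots> = of_int ((t^2 - 4 * N) * D)" unfolding hq by (simp only: of_rat_of_int_eq)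
  finally have hr: "real_of_rat h * real_of_rat h = of_int ((t^2 - 4 * N) * D)" .
  have "algebraic_int (real_of_rat h)"
    by (rule alg_int_quad[of _ 0 "- ((t^2 - 4 * N) * D)"]) (simp add: hr)
  hence "real_of_rat h \<in> \<int>" using rational_algebraic_int_is_int Rats_of_rat by blast
  then obtain hh where hh: "real_of_rat h = of_int hh" by (auto elim: Ints_cases)
  hence "h = of_int hh" by (metis of_rat_eq_iff of_rat_of_int_eq)
  hence "(t^2 - 4 * N) * D = hh^2" using hq by (metis of_int_eq_iff of_int_mult power2_eq_square)
  hence p2N: "int p ^ 2 dvd N"
    using nt_lemma[OF prime_int_p p_nd_D pt pN] a1_odd_if2 by simp
  then obtain N' where N': "N = int p ^ 2 * N'" by auto
  obtain t' where t': "t = int p * t'" using pt by auto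
  define w where "w = of_rat (1 / of_nat p) * x"
  have w: "w = x / real p" unfolding w_def by (simp add: of_rat_divide)
  have wK: "w \<in> quadK a1" "cnj w = of_rat (1 / of_nat p) * cnj x"
    unfolding w_def using quadK_scale O_quadK[OF xO] by auto
  have "of_rat (1 / of_nat p) * cnj x = cnj x / real p" by (simp add: of_rat_divide)
  with wK(2) have cw: "cnj w = cnj x / real p" by (rule trans)
  have "w + cnj w = of_int t'" using t t' p_ne by (subst cw) (simp add: w add_divide_distrib[symmetric])
  hence wt: "w + cnj w \<in> \<int>" by simp
  have "w * cnj w = of_int N'" using N N' p_ne by (subst cw) (simp add: w power2_eq_square)
  hence wn: "w * cnj w \<in> \<int>" by simp
  show ?thesis using O_by_tn[OF wK(1) wt wn] unfolding w .
qed

lemma tau_ex: "\<exists>\<tau>\<in>Ok. \<tau> \<notin> P \<and> (\<forall>x\<in>P. \<tau> * x / real p \<in> Ok)"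
proof (cases "\<forall>y\<in>P. cnj y \<in> P")
  case True
  show ?thesis using K2[OF True] one_notin O_int[of 1] by (intro bexI[of _ 1]) auto
next
  case False
  then obtain y where y: "y \<in> P" "cnj y \<notin> P" by blast
  show ?thesis using K1[OF _ y(1)] y O_cnj[OF P_O[OF y(1)]]
    by (intro bexI[of _ "cnj y"]) (auto simp: mult.commute)
qed

end


context L begin

abbreviation "A \<equiv> al ^ 2"
abbreviation "E I k \<equiv> A ^ k - 1 \<in> I"

lemma A_O: "A \<in> Ok" using O_pow al_O by blast
lemma B_O: "be ^ 2 \<in> Ok" using O_pow be_O by blast
lemma AB: "A ^ a * (be ^ 2) ^ a = 1"
proof -
  have "A ^ a * (be ^ 2) ^ a = ((al * be) ^ 2) ^ a" by (simp add: power_mult_distrib)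
  also have "\<dots> = 1" using ab_prod by simp
  finally show ?thesis .
qed

lemma E_add: assumes I: "ideal I RR" and "E I a" "E I b" shows "E I (a + b)"
proof -
  have e: "A ^ (a + b) - 1 = A ^ a * (A ^ b - 1) + (A ^ a - 1)" by (simp add: power_add algebra_simps)
  show ?thesis unfolding e by (rule I_add[OF I I_mult[OF I O_pow[OF A_O] assms(3)] assms(2)])
qed

lemma E_sub: assumes I: "ideal I RR" and "E I (a + b)" "E I a" shows "E I b"
proof -
  have e: "A ^ b - 1 = (be^2) ^ a * (A ^ (a + b) - 1) - (be^2) ^ a * (A ^ a - 1)"
  proof -
    have "(be^2) ^ a * (A ^ (a + b) - 1) - (be^2) ^ a * (A ^ a - 1)
          = (A ^ a * (be^2) ^ a) * A ^ b - A ^ a * (be^2) ^ a"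
      by (simp add: power_add algebra_simps)
    thus ?thesis using AB by simp
  qed
  show ?thesis unfolding e by (rule I_diff[OF I I_mult[OF I O_pow[OF B_O] assms(2)] I_mult[OF I O_pow[OF B_O] assms(3)]])
qed

lemma E_mul: assumes I: "ideal I RR" and "E I d" shows "E I (d * q)"
proof (induction q)
  case 0 thus ?case using I_zero[OF I] by simp
next
  case (Suc q) thus ?case using E_add[OF I assms(2) Suc] by (simp add: add.commute)
qed

lemma ord_char:
  assumes I: "ideal I RR" and ex: "\<exists>k>0. E I k"
  shows "ord_mod I A > 0" "E I n \<longleftrightarrow> ord_mod I A dvd n"
proof -
  define d where "d = ord_mod I A"
  have dl: "d = (LEAST k. k > 0 \<and> E I k)" unfolding d_def ord_mod_def ..
  have d: "d > 0 \<and> E I d" unfolding dl by (rule LeastI_ex) (use ex in blast)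
  have dmin: "\<And>k. k > 0 \<Longrightarrow> E I k \<Longrightarrow> d \<le> k" unfolding dl by (rule Least_le) blast
  show "ord_mod I A > 0" using d d_def by simp
  show "E I n \<longleftrightarrow> ord_mod I A dvd n" unfolding d_def[symmetric]
  proof
    assume En: "E I n"
    have n: "n = d * (n div d) + n mod d" by simp
    have "E I (d * (n div d))" using E_mul[OF I] d by blast
    hence "E I (n mod d)" using E_sub[OF I, of "d * (n div d)" "n mod d"] En n by simp
    moreover have "n mod d < d" using d by simp
    ultimately have "n mod d = 0" using dmin by (meson leD neq0_conv)
    thus "d dvd n" by auto
  next
    assume "d dvd n"
    then obtain q where "n = d * q" by auto
    thus "E I n" using E_mul[OF I] d by blast
  qed
qed

lemma ord_ex:
  assumes I: "ideal I RR" and M: "of_int M \<in> I" "M > 0"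
  shows "\<exists>k>0. E I k"
proof -
  define f where "f = (\<lambda>j. (U j mod M, U (Suc j) mod M))"
  define S where "S = {0..nat (M * M)}"
  have fin: "finite ({0..<M} \<times> {0..<M})" by simp
  have "f ` S \<subseteq> {0..<M} \<times> {0..<M}" unfolding f_def using M(2) by auto
  hence "card (f ` S) \<le> card ({0..<M} \<times> {0..<M})" using fin card_mono by blast
  also have "\<dots> = nat M * nat M" by (simp add: card_cartesian_product)
  also have "\<dots> = nat (M * M)" using M(2) by (simp add: nat_mult_distrib)
  also have "\<dots> < card S" unfolding S_def by simp
  finally have "\<not> inj_on f S" by (rule pigeonhole)
  then obtain i j where ij: "f i = f j" "i \<noteq> j" unfolding inj_on_def by blast
  have "\<exists>i j. f i = f j \<and> i < j"
  proof (cases "i < j")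
    case True thus ?thesis using ij by blast
  next
    case False thus ?thesis using ij by (intro exI[of _ j] exI[of _ i]) auto
  qed
  then obtain i j where ij: "f i = f j" "i < j" by blast
  have "U (Suc j) mod M = U (Suc i) mod M" using ij(1) unfolding f_def by simp
  hence m1: "M dvd U (Suc j) - U (Suc i)" using mod_eq_dvd_iff by blast
  have "U j mod M = U i mod M" using ij(1) unfolding f_def by simp
  hence m2: "M dvd U j - U i" using mod_eq_dvd_iff by blast
  obtain c1 where c1: "U (Suc j) - U (Suc i) = M * c1" using m1 by auto
  obtain c2 where c2: "U j - U i = M * c2" using m2 by auto
  have "al ^ Suc j - al ^ Suc i = of_int (U (Suc j) - U (Suc i)) * al + of_int (U j - U i)"
    unfolding al_pow by (simp add: algebra_simps)
  also have "\<dots> = (of_int c1 * al + of_int c2) * of_int M" unfolding c1 c2 by (simp add: algebra_simps)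
  finally have eq1: "al ^ Suc j - al ^ Suc i = (of_int c1 * al + of_int c2) * of_int M" .
  have in1: "al ^ Suc j - al ^ Suc i \<in> I" unfolding eq1
    using I_mult[OF I _ M(1)] O_add O_mult O_int al_O by simp
  define dd where "dd = j - i"
  have dd: "dd > 0" "j = i + dd" using ij(2) unfolding dd_def by auto
  have "al ^ dd - 1 = (- be) ^ Suc i * (al ^ Suc j - al ^ Suc i)"
  proof -
    have "(- be) ^ Suc i * al ^ Suc i = (al * (- be)) ^ Suc i" by (simp only: power_mult_distrib mult.commute)
    hence yx: "(- be) ^ Suc i * al ^ Suc i = 1" using nb_al by (simp only: power_one)
    have aj: "al ^ Suc j = al ^ Suc i * al ^ dd" unfolding dd(2) by (simp add: power_add)
    have "(- be) ^ Suc i * (al ^ Suc j - al ^ Suc i)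
        = ((- be) ^ Suc i * al ^ Suc i) * al ^ dd - (- be) ^ Suc i * al ^ Suc i"
      unfolding aj by (simp add: algebra_simps)
    thus ?thesis unfolding yx by simp
  qed
  moreover have "(- be) ^ Suc i * (al ^ Suc j - al ^ Suc i) \<in> I"
    by (rule I_mult[OF I O_pow[OF O_neg[OF be_O]] in1])
  ultimately have in2: "al ^ dd - 1 \<in> I" by simp
  have "A ^ dd - 1 = (al ^ dd + 1) * (al ^ dd - 1)"
    by (simp add: power_mult[symmetric] mult.commute[of 2] power_mult algebra_simps power2_eq_square)
  hence "E I dd" using I_mult[OF I _ in2] O_add O_pow al_O O_int[of 1] by simp
  thus ?thesis using dd by blast
qed

end

context PL begin

lemma tau_pow_notin: "\<tau> \<in> Ok \<Longrightarrow> \<tau> \<notin> P \<Longrightarrow> \<tau> ^ j \<notin> P"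
proof (induction j)
  case 0 thus ?case using one_notin by simp
next
  case (Suc j) thus ?case using P_prime[OF Suc.prems(1) O_pow[OF Suc.prems(1)]] by auto
qed

lemma filt:
  assumes t: "\<tau> \<in> Ok" "\<tau> \<notin> P" "\<forall>x\<in>P. \<tau> * x / real p \<in> Ok"
  shows "x \<in> ideal_pow RR P j \<Longrightarrow> \<tau> ^ j * x / real p ^ j \<in> Ok"
proof (induction j arbitrary: x)
  case 0 thus ?case by simp
next
  case (Suc j)
  have "x \<in> ideal_prod RR P (ideal_pow RR P j)" using Suc.prems by simp
  thus ?case
  proof (induct x rule: ideal_prod.induct)
    case (prod i k)
    have eq: "\<tau> ^ Suc j * (i \<otimes>\<^bsub>RR\<^esub> k) / real p ^ Suc j = (\<tau> * i / real p) * (\<tau> ^ j * k / real p ^ j)"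
      by simp
    show ?case unfolding eq by (rule O_mult) (use t(3) prod Suc.IH in auto)
  next
    case (sum s1 s2)
    have "\<tau> ^ Suc j * (s1 \<oplus>\<^bsub>RR\<^esub> s2) / real p ^ Suc j
        = \<tau> ^ Suc j * s1 / real p ^ Suc j + \<tau> ^ Suc j * s2 / real p ^ Suc j"
      by (simp add: algebra_simps add_divide_distrib)
    thus ?case using O_add sum by presburger
  qed
qed

lemma int_lem:
  assumes t: "\<tau> \<in> Ok" "\<tau> \<notin> P"
  shows "i \<le> j \<Longrightarrow> \<tau> ^ j * of_int m / real p ^ i \<in> Ok \<Longrightarrow> int p ^ i dvd m"
proof (induction i arbitrary: m)
  case 0 thus ?case by simp
next
  case (Suc i)
  define w where "w = \<tau> ^ j * of_int m / real p ^ Suc i"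
  have wO: "w \<in> Ok" using Suc.prems w_def by simp
  have "\<tau> ^ j * of_int m = real p * (real p ^ i * w)" unfolding w_def using p_ne by simp
  moreover have "real p * (real p ^ i * w) \<in> P" using P_mult2[OF pP O_mult[OF O_pow[OF O_nat] wO]] .
  ultimately have "\<tau> ^ j * of_int m \<in> P" by simp
  hence "of_int m \<in> P" using P_prime[OF O_pow[OF t(1)] O_int] tau_pow_notin[OF t] by blast
  hence "int p dvd m" using P_int by simp
  then obtain m' where m': "m = int p * m'" by auto
  have "\<tau> ^ j * of_int m' / real p ^ i = w" unfolding w_def m' using p_ne by simp
  hence "int p ^ i dvd m'" using Suc.IH[of m'] Suc.prems wO by simp
  thus ?case unfolding m' by simp
qed

lemma int_pow_dvd: "of_int m \<in> ideal_pow RR P v \<Longrightarrow> int p ^ v dvd m"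
proof -
  assume m: "of_int m \<in> ideal_pow RR P v"
  obtain \<tau> where t: "\<tau> \<in> Ok" "\<tau> \<notin> P" "\<forall>x\<in>P. \<tau> * x / real p \<in> Ok" using tau_ex by blast
  show ?thesis using int_lem[OF t(1,2) order.refl] filt[OF t m] by blast
qed

end


context PL begin

lemma rdvd_int: "rdvd d (of_int X) \<longleftrightarrow> d dvd X"
  unfolding rdvd_def dvd_def by (metis of_int_eq_iff)

lemma p_nd_Mn: "\<not> int p dvd Mn n"
  unfolding Mn_def using p_nd_a1 p_nd_D prime_int_p
  by (auto simp: prime_dvd_mult_iff prime_dvd_power_iff)

lemma ME: assumes n: "n \<ge> 1"
  shows "rdvd (int p ^ v) (lehmer a1 n) \<longleftrightarrow> E (ideal_pow RR P v) n"
proof -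
  define I where "I = ideal_pow RR P v"
  have I: "ideal I RR" unfolding I_def using ideal_pow_ideal[OF P_ideal] .
  have pv: "real p ^ v \<in> I" unfolding I_def using pow_mem[OF P_ideal pP] .
  have kid: "A ^ n - 1 = al ^ n * cn n * of_int (Lf n)" using key_id[OF n] .
  have "rdvd (int p ^ v) (lehmer a1 n) \<longleftrightarrow> int p ^ v dvd Lf n" using lehmer_int[OF n] rdvd_int by simp
  also have "\<dots> \<longleftrightarrow> E I n"
  proof
    assume "int p ^ v dvd Lf n"
    then obtain z where z: "Lf n = int p ^ v * z" by auto
    have "A ^ n - 1 = (al ^ n * cn n * of_int z) * real p ^ v" unfolding kid z by simp
    moreover have "(al ^ n * cn n * of_int z) * real p ^ v \<in> I"
      using I_mult[OF I _ pv] O_mult O_pow al_O cn_O O_int by simp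
    ultimately show "E I n" by simp
  next
    assume En: "E I n"
    have yx: "(- be) ^ n * al ^ n = 1"
    proof -
      have "(- be) ^ n * al ^ n = (al * (- be)) ^ n" by (simp only: power_mult_distrib mult.commute)
      thus ?thesis using nb_al by (simp only: power_one)
    qed
    have "(- be) ^ n * (A ^ n - 1) = ((- be) ^ n * al ^ n) * (cn n * of_int (Lf n))"
      unfolding kid by (simp add: algebra_simps)
    hence e3: "(- be) ^ n * (A ^ n - 1) = cn n * of_int (Lf n)" unfolding yx by simp
    have in3: "cn n * of_int (Lf n) \<in> I"
      unfolding e3[symmetric] by (rule I_mult[OF I O_pow[OF O_neg[OF be_O]] En])
    have "coprime (int p) (Mn n)" using prime_int_p p_nd_Mn prime_imp_coprime by blast
    hence "coprime (Mn n) (int p ^ v)" by (simp add: coprime_commute)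
    then obtain u w where uw: "u * Mn n + w * int p ^ v = 1" using bez by blast
    have "of_int (Lf n) = (of_int u * cn n) * (cn n * of_int (Lf n)) + of_int (w * Lf n) * real p ^ v"
    proof -
      have "(of_int u * cn n) * (cn n * of_int (Lf n)) + of_int (w * Lf n) * real p ^ v
          = of_int (Lf n) * (of_int u * (cn n * cn n) + of_int w * real p ^ v)" by (simp add: algebra_simps)
      also have "\<dots> = of_int (Lf n) * of_int (u * Mn n + w * int p ^ v)" unfolding cn_sq by simp
      also have "\<dots> = of_int (Lf n)" unfolding uw by simp
      finally show ?thesis by simp
    qed
    moreover have "(of_int u * cn n) * (cn n * of_int (Lf n)) + of_int (w * Lf n) * real p ^ v \<in> I"
      by (rule I_add[OF I I_mult[OF I O_mult[OF O_int cn_O] in3] I_mult[OF I O_int pv]])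
    ultimately have "of_int (Lf n) \<in> I" by simp
    thus "int p ^ v dvd Lf n" using int_pow_dvd unfolding I_def by blast
  qed
  finally show ?thesis unfolding I_def .
qed

lemma part1: assumes "n \<ge> 1"
  shows "rdvd (int p ^ v) (lehmer a1 n) \<longleftrightarrow> ord_mod (ideal_pow RR P v) A dvd n"
proof -
  define I where "I = ideal_pow RR P v"
  have I: "ideal I RR" unfolding I_def using ideal_pow_ideal[OF P_ideal] .
  have pv: "of_int (int p ^ v) \<in> I" unfolding I_def using pow_mem[OF P_ideal pP] by simp
  have ex: "\<exists>k>0. E I k" by (rule ord_ex[OF I pv]) (use p_pos in simp)
  show ?thesis using ME[OF assms] ord_char(2)[OF I ex] unfolding I_def by blast
qed

lemma part2: assumes n: "n \<ge> 1"
  shows "primitive_divisor a1 p n \<longleftrightarrow> n = ord_mod P A"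
proof -
  define d where "d = ord_mod P A"
  have ex: "\<exists>k>0. E P k" by (rule ord_ex[OF P_ideal, of "int p"]) (use pP p_pos in simp_all)
  have dpos: "d > 0" unfolding d_def using ord_char(1)[OF P_ideal ex] .
  have ch: "int p dvd Lf k \<longleftrightarrow> d dvd k" if "k \<ge> 1" for k
    using part1[OF that, of 1] lehmer_int[OF that] rdvd_int ideal_pow_one[OF P_ideal] d_def by simp
  have c2: "(al ^ 2 - be ^ 2) ^ 2 = of_int (Mn 2)" using cn_sq[of 2] unfolding cn_def by (simp add: power2_eq_square)
  have "(\<Prod>k\<in>{1..<n}. lehmer a1 k) = (\<Prod>k\<in>{1..<n}. (of_int (Lf k) :: real))"
    by (rule prod.cong) (simp_all add: lehmer_int)
  also have "\<dots> = of_int (\<Prod>k\<in>{1..<n}. Lf k)" by (rule of_int_prod[symmetric])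
  finally have pr: "(\<Prod>k\<in>{1..<n}. lehmer a1 k) = of_int (\<Prod>k\<in>{1..<n}. Lf k)" .
  have prod_eq: "(al ^ 2 - be ^ 2) ^ 2 * (\<Prod>k\<in>{1..<n}. lehmer a1 k) = of_int (Mn 2 * (\<Prod>k\<in>{1..<n}. Lf k))"
    unfolding c2 pr by (rule of_int_mult[symmetric])
  have "primitive_divisor a1 p n \<longleftrightarrow> int p dvd Lf n \<and> \<not> int p dvd (Mn 2 * (\<Prod>k\<in>{1..<n}. Lf k))"
    unfolding primitive_divisor_def prod_eq lehmer_int[OF n] rdvd_int using prime_p by blast
  also have "\<dots> \<longleftrightarrow> d dvd n \<and> \<not> (\<exists>k\<in>{1..<n}. d dvd k)"
  proof -
    have "int p dvd (Mn 2 * (\<Prod>k\<in>{1..<n}. Lf k)) \<longleftrightarrow> (\<exists>k\<in>{1..<n}. int p dvd Lf k)"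
      using p_nd_Mn[of 2] by (simp add: prime_dvd_mult_iff[OF prime_int_p] prime_dvd_prod_iff[OF finite_atLeastLessThan prime_int_p])
    also have "\<dots> \<longleftrightarrow> (\<exists>k\<in>{1..<n}. d dvd k)" using ch by auto
    finally show ?thesis using ch[OF n] by blast
  qed
  also have "\<dots> \<longleftrightarrow> n = d"
  proof
    assume h: "d dvd n \<and> \<not> (\<exists>k\<in>{1..<n}. d dvd k)"
    hence "d \<le> n" using n by (simp add: dvd_imp_le)
    moreover have "\<not> d < n"
    proof
      assume "d < n"
      hence "d \<in> {1..<n}" using dpos by simp
      moreover have "d dvd d" by simp
      ultimately show False using h by blast
    qed
    ultimately show "n = d" by simp
  next
    assume nd: "n = d"
    have "\<not> d dvd k" if "k \<in> {1..<n}" for k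
    proof
      assume "d dvd k"
      hence "d \<le> k" using that by (intro dvd_imp_le) auto
      thus False using that nd by simp
    qed
    moreover have "d dvd n" using nd by simp
    ultimately show "d dvd n \<and> \<not> (\<exists>k\<in>{1..<n}. d dvd k)" by blast
  qed
  finally show ?thesis unfolding d_def .
qed

end

theorem mainTheorem7:
  fixes a1 :: int and n v p :: nat and P :: "real set"
  assumes "a1 \<ge> 1" and "n \<ge> 1" and "v \<ge> 1"
    and "prime p" and "\<not> int p dvd a1 * qD a1"
    and "primeideal P (OK_ring a1)" and "real p \<in> P"
  shows "(rdvd (int p ^ v) (lehmer a1 n) \<longleftrightarrow>
            ord_mod (ideal_pow (OK_ring a1) P v) (alpha a1 ^ 2) dvd n)
       \<and> (primitive_divisor a1 p n \<longleftrightarrow> n = ord_mod P (alpha a1 ^ 2))"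
proof -
  have cr: "cring (OK_ring a1)" using assms(6) primeideal.axioms(2) by blast
  interpret PL a1 p P
    by (intro PL.intro L.intro PL_axioms.intro) (use assms cr in auto)
  show ?thesis by (intro conjI part1[OF assms(2)] part2[OF assms(2)])
qed


end
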